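(* Let $d \ge 1$. There exists a ReLU network $f:\mathbb{R}^d\to\mathbb{R}$ with $d$ inputs, one hidden layer of $d$ ReLU neurons, and one output, i.e. a function of the form $f(z) = c_0 + \sum_{k=1}^{d} c_k\,\mathrm{ReLU}(w_k^\top z + b_k)$ with $c_k, b_k \in \mathbb{R}$, $w_k\in\mathbb{R}^d$, such that for all $x \in \mathbb{R}^d$ and all $\xi \in \mathbb{R}$, $$f(x - \xi 1_d) \le 0 \iff \max\{x_1,\dots,x_d\} \le \xi,$$ where $1_d$ is the all-ones vector in $\mathbb{R}^d$.
   Context: $\mathrm{ReLU}(t)=\max(t,0)$. The expression $x-\xi$ in the paper denotes subtracting the scalar $\xi$ from every coordinate of $x$, written here as $x-\xi 1_d$. *)

theory Defs
  imports "HOL-Analysis.Analysis"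
begin

definition ReLU :: "real \<Rightarrow> real" where
  "ReLU t = max t 0"

end

theory Submission
  imports Defs
begin

lemma inner_e: "(\<chi> i. if i = k then 1 else 0) \<bullet> (v::real^'n) = v $ k"
proof -
  have "(\<chi> i. if i = k then 1 else 0) \<bullet> (v::real^'n) = (\<Sum>i\<in>UNIV. if i = k then v $ i else 0)"
    unfolding inner_vec_def by (intro sum.cong) auto
  then show ?thesis by simp
qed

theorem theorem1:
  shows "\<exists>(c0::real) (c::real^'n) (b::real^'n) (w::real^'n^'n).
     \<forall>(x::real^'n) (\<xi>::real).
       (c0 + (\<Sum>k\<in>UNIV. c $ k * ReLU (w $ k \<bullet> (x - \<xi> *\<^sub>R (\<chi> i. 1)) + b $ k)) \<le> 0)
       \<longleftrightarrow> Max (range (\<lambda>i. x $ i)) \<le> \<xi>"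
proof (intro exI allI)
  fix x :: "real^'n" and \<xi> :: real
  have e: "((\<chi> k. \<chi> i. if i = k then 1 else 0) :: real^'n^'n) $ k \<bullet> (x - \<xi> *\<^sub>R (\<chi> i. 1)) = x $ k - \<xi>" for k
    using inner_e[of k "x - \<xi> *\<^sub>R (\<chi> i. 1)"] by simp
  have "(0 + (\<Sum>k\<in>UNIV. ((\<chi> k. 1)::real^'n) $ k * ReLU (((\<chi> k. \<chi> i. if i = k then 1 else 0) :: real^'n^'n) $ k \<bullet> (x - \<xi> *\<^sub>R (\<chi> i. 1)) + (0::real^'n) $ k)) \<le> 0)
     \<longleftrightarrow> (\<Sum>k\<in>UNIV. ReLU (x $ k - \<xi>)) \<le> 0"
    by (simp add: inner_e)
  also have "\<dots> \<longleftrightarrow> (\<forall>k. ReLU (x $ k - \<xi>) = 0)"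
  proof -
    have nn: "\<forall>k\<in>UNIV. 0 \<le> ReLU (x $ k - \<xi>)" by (simp add: ReLU_def)
    have "(\<Sum>k\<in>UNIV. ReLU (x $ k - \<xi>)) \<le> 0 \<longleftrightarrow> (\<Sum>k\<in>UNIV. ReLU (x $ k - \<xi>)) = 0"
      using sum_nonneg[of UNIV "\<lambda>k. ReLU (x $ k - \<xi>)"] nn by (simp add: ReLU_def)
    also have "\<dots> \<longleftrightarrow> (\<forall>k. ReLU (x $ k - \<xi>) = 0)"
      using sum_nonneg_eq_0_iff[of UNIV "\<lambda>k. ReLU (x $ k - \<xi>)"] nn by simp
    finally show ?thesis .
  qed
  also have "\<dots> \<longleftrightarrow> (\<forall>k. x $ k \<le> \<xi>)" by (auto simp: ReLU_def max_def)
  also have "\<dots> \<longleftrightarrow> Max (range (\<lambda>i. x $ i)) \<le> \<xi>"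
    by (subst Max_le_iff) auto
  finally show "(0 + (\<Sum>k\<in>UNIV. ((\<chi> k. 1)::real^'n) $ k * ReLU (((\<chi> k. \<chi> i. if i = k then 1 else 0) :: real^'n^'n) $ k \<bullet> (x - \<xi> *\<^sub>R (\<chi> i. 1)) + (0::real^'n) $ k)) \<le> 0)
     \<longleftrightarrow> Max (range (\<lambda>i. x $ i)) \<le> \<xi>" .
qed

end
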